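(* Let $1<p<\infty$, $1/p-1<\gamma<1/p$, and $\{\lambda_n\}_{n=1}^\infty\in\mathrm{GBV}$. Then there is a constant $C$ depending only on $M(\lambda)$, $p$ and $\gamma$ such that $$\sum_{n=1}^\infty n^{p+p\gamma-2}\Big(\sum_{k=n}^\infty|\lambda_k-\lambda_{k+1}|\Big)^p\le C\sum_{n=1}^\infty n^{p+p\gamma-2}\lambda_n^p .$$
   Context: $\Delta c_n:=c_n-c_{n+1}$. A sequence $\mathbf c=\{c_n\}_{n=1}^\infty$ belongs to the class $\mathrm{GBV}$ if $c_n\ge 0$ for all $n$, $c_n\to 0$ as $n\to\infty$, and there is a positive constant $M(\mathbf c)$ depending only on $\mathbf c$ such that $\sum_{n=m}^{2m}|\Delta c_n|\le M(\mathbf c)\,c_m$ for all $m=1,2,\dots$. *)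

theory Defs
  imports "HOL-Analysis.Analysis"
begin

text \<open>Sequences are indexed from 1; the value at index 0 is ignored.
  The difference operator: \<Delta> c n = c n - c (n+1).\<close>

definition Delta :: "(nat \<Rightarrow> real) \<Rightarrow> nat \<Rightarrow> real" where
  "Delta c n = c n - c (Suc n)"

definition GBV_with :: "real \<Rightarrow> (nat \<Rightarrow> real) \<Rightarrow> bool" where
  "GBV_with M c \<longleftrightarrow> M > 0 \<and> (\<forall>n\<ge>1. c n \<ge> 0) \<and> c \<longlonglongrightarrow> 0 \<and>
     (\<forall>m\<ge>1. (\<Sum>n=m..2*m. \<bar>Delta c n\<bar>) \<le> M * c m)"

definition GBV :: "(nat \<Rightarrow> real) \<Rightarrow> bool" where
  "GBV c \<longleftrightarrow> (\<exists>M. GBV_with M c)"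

definition ennpow :: "ennreal \<Rightarrow> real \<Rightarrow> ennreal" where
  "ennpow x p = (if x = top then top else ennreal (enn2real x powr p))"

end

theory Submission imports Defs begin

lemma ennpow_mono:
  assumes "x \<le> y" "0 \<le> p" shows "ennpow x p \<le> ennpow y p"
proof (cases "y = top")
  case True then show ?thesis by (simp add: ennpow_def)
next
  case False
  then have "x \<noteq> top" using assms(1) top.extremum_unique by fastforce
  moreover have "enn2real x \<le> enn2real y" using assms(1) False by (simp add: enn2real_mono top.not_eq_extremum)
  ultimately show ?thesis using False assms
    by (simp add: ennpow_def ennreal_leI powr_mono2)
qed

lemma ennpow_ennreal: "0 \<le> x \<Longrightarrow> ennpow (ennreal x) p = ennreal (x powr p)"
  by (simp add: ennpow_def)

lemma ennsum_swap: "(\<Sum>i. \<Sum>j. f i j :: ennreal) = (\<Sum>j. \<Sum>i. f i j)"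
proof -
  have "(\<Sum>i. \<Sum>j. f i j) = (\<Sum>i. \<integral>\<^sup>+j. f i j \<partial>count_space UNIV)"
    by (simp add: nn_integral_count_space_nat)
  also have "\<dots> = (\<integral>\<^sup>+j. (\<Sum>i. f i j) \<partial>count_space UNIV)"
    by (rule nn_integral_suminf[symmetric]) auto
  also have "\<dots> = (\<Sum>j. \<Sum>i. f i j)" by (simp add: nn_integral_count_space_nat)
  finally show ?thesis .
qed

lemma dyadic_partial:
  "(\<Sum>l<N. \<Sum>n\<in>{2^(i+l)..<2^(i+l+1)}. f n) = (\<Sum>n\<in>{(2::nat)^i..<2^(i+N)}. (f n :: 'a::comm_monoid_add))"
proof (induction N)
  case 0 then show ?case by simp
next
  case (Suc N)
  have "(2::nat)^i \<le> 2^(i+N)" "(2::nat)^(i+N) \<le> 2^(i+N+1)" by (simp_all add: power_increasing)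
  then show ?case using Suc by (simp add: sum.atLeastLessThan_concat)
qed

lemma dyadic_infsum:
  fixes f :: "nat \<Rightarrow> ennreal"
  shows "infsum f {2^i..} = (\<Sum>l. \<Sum>n\<in>{2^(i+l)..<2^(i+l+1)}. f n)"
proof -
  have L: "infsum f {2^i..} = (SUP F\<in>{F. finite F \<and> F\<subseteq>{2^i..}}. sum f F)"
    by (rule nonneg_infsum_complete) simp
  have R: "(\<Sum>l. \<Sum>n\<in>{2^(i+l)..<2^(i+l+1)}. f n) = (SUP N. \<Sum>n\<in>{(2::nat)^i..<2^(i+N)}. f n)"
    by (simp only: suminf_eq_SUP dyadic_partial)
  show ?thesis unfolding L R
  proof (rule antisym)
    show "(SUP F\<in>{F. finite F \<and> F\<subseteq>{2^i..}}. sum f F) \<le> (SUP N. \<Sum>n\<in>{(2::nat)^i..<2^(i+N)}. f n)"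
    proof (rule SUP_least)
      fix F assume F: "F \<in> {F. finite F \<and> F\<subseteq>{(2::nat)^i..}}"
      define N where "N = Suc (Max (insert 0 F))"
      have "F \<subseteq> {2^i..<2^(i+N)}"
      proof
        fix x assume "x \<in> F"
        then have "x \<le> Max (insert 0 F)" using F by simp
        also have "\<dots> < N" by (simp add: N_def)
        also have "N < 2^N" by simp
        also have "(2::nat)^N \<le> 2^(i+N)" by (simp add: power_increasing)
        finally show "x \<in> {2^i..<2^(i+N)}" using F \<open>x \<in> F\<close> by auto
      qed
      then have "sum f F \<le> (\<Sum>n\<in>{(2::nat)^i..<2^(i+N)}. f n)"
        by (intro sum_mono2) auto
      then show "sum f F \<le> (SUP N. \<Sum>n\<in>{(2::nat)^i..<2^(i+N)}. f n)"
        by (rule SUP_upper2[OF UNIV_I])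
    qed
  next
    show "(SUP N. \<Sum>n\<in>{(2::nat)^i..<2^(i+N)}. f n) \<le> (SUP F\<in>{F. finite F \<and> F\<subseteq>{2^i..}}. sum f F)"
      by (rule SUP_least, rule SUP_upper) auto
  qed
qed

lemma infsum_mono_set_ennreal:
  fixes f :: "nat \<Rightarrow> ennreal"
  assumes "A \<subseteq> B" shows "infsum f A \<le> infsum f B"
proof -
  have "infsum f A = (SUP F\<in>{F. finite F \<and> F\<subseteq>A}. sum f F)"
    by (rule nonneg_infsum_complete) simp
  also have "\<dots> \<le> (SUP F\<in>{F. finite F \<and> F\<subseteq>B}. sum f F)"
    by (rule SUP_subset_mono) (use assms in auto)
  also have "\<dots> = infsum f B" by (rule nonneg_infsum_complete[symmetric]) simp
  finally show ?thesis .
qed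


lemma ennsum_term_le: "(f l :: ennreal) \<le> suminf f"
  using sum_le_suminf[OF summableI, of "{l}" f] by simp

lemma ennsum_offset_le: "(\<Sum>j. f (j + i) :: ennreal) \<le> suminf f"
  using suminf_offset[OF summableI, of f i] by simp

lemma pow_sum_bound:
  fixes x :: "nat \<Rightarrow> real"
  assumes x: "\<And>l. 0 \<le> x l" and p: "0 < p" and q: "0 < q" "q < 1"
  shows "ennpow (\<Sum>l. ennreal (x l)) p
     \<le> ennreal ((1-q) powr (-p)) * (\<Sum>l. ennreal (q powr (-p * real l) * x l powr p))"
proof (cases "(\<Sum>l. ennreal (q powr (-p * real l) * x l powr p)) = top")
  case True
  have "0 < (1-q) powr (-p)" using q by simp
  then show ?thesis using True by (simp add: ennreal_mult_top)
next
  case False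
  define X where "X = (\<Sum>l. ennreal (q powr (-p * real l) * x l powr p))"
  obtain Xr where Xr: "0 \<le> Xr" "X = ennreal Xr" using False less_top_ennreal X_def top.not_eq_extremum by blast
  have bound: "x l \<le> Xr powr (1/p) * q ^ l" for l
  proof -
    have "ennreal (q powr (-p * real l) * x l powr p) \<le> X" unfolding X_def by (rule ennsum_term_le)
    then have "q powr (-p * real l) * x l powr p \<le> Xr" using Xr by (simp add: ennreal_le_iff)
    then have "x l powr p \<le> Xr * q powr (p * real l)"
      using q by (simp add: powr_minus field_simps)
    then have "(x l powr p) powr (1/p) \<le> (Xr * q powr (p * real l)) powr (1/p)"
      using p by (auto intro!: powr_mono2)
    also have "(Xr * q powr (p * real l)) powr (1/p) = Xr powr (1/p) * q ^ l"
      using p q Xr by (simp add: powr_mult powr_powr powr_realpow)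
    also have "(x l powr p) powr (1/p) = x l" using p x[of l] by (simp add: powr_powr)
    finally show ?thesis .
  qed
  have geo: "summable (\<lambda>l. Xr powr (1/p) * q ^ l)" using q by (intro summable_mult summable_geometric) auto
  have "(\<Sum>l. ennreal (x l)) \<le> (\<Sum>l. ennreal (Xr powr (1/p) * q ^ l))"
    by (intro suminf_le summableI ennreal_leI bound)
  also have "\<dots> = ennreal (Xr powr (1/p) / (1 - q))"
    using geo q by (simp add: suminf_ennreal2 suminf_mult suminf_geometric)
  finally have "ennpow (\<Sum>l. ennreal (x l)) p \<le> ennpow (ennreal (Xr powr (1/p) / (1 - q))) p"
    by (rule ennpow_mono) (use p in auto)
  also have "\<dots> = ennreal ((Xr powr (1/p) / (1 - q)) powr p)" using Xr q by (simp add: ennpow_ennreal)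
  also have "(Xr powr (1/p) / (1 - q)) powr p = (1-q) powr (-p) * Xr"
    using Xr q p by (simp add: powr_divide powr_powr powr_minus divide_simps)
  also have "ennreal ((1-q) powr (-p) * Xr) = ennreal ((1-q) powr (-p)) * X"
    using Xr by (simp add: ennreal_mult)
  finally show ?thesis unfolding X_def .
qed


lemma gbv_sum_le:
  assumes g: "GBV_with M c" and m: "1 \<le> m" and k: "m \<le> k" "k \<le> 2*m"
  shows "(\<Sum>i=m..<k. \<bar>Delta c i\<bar>) \<le> M * c m"
proof -
  have "(\<Sum>i=m..<k. \<bar>Delta c i\<bar>) \<le> (\<Sum>i=m..2*m. \<bar>Delta c i\<bar>)"
    using k by (intro sum_mono2) auto
  also have "\<dots> \<le> M * c m" using g m unfolding GBV_with_def by blast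
  finally show ?thesis .
qed

lemma gbv_step:
  assumes g: "GBV_with M c" and m: "1 \<le> m" and k: "m \<le> k" "k \<le> 2*m"
  shows "c k \<le> (1+M) * c m"
proof -
  have "(\<Sum>i=m..<k. c (Suc i) - c i) = c k - c m" using k(1) by (rule sum_Suc_diff')
  then have "c k = c m - (\<Sum>i=m..<k. Delta c i)"
    by (simp add: Delta_def sum_subtractf)
  also have "\<dots> \<le> c m + (\<Sum>i=m..<k. \<bar>Delta c i\<bar>)"
    using sum_abs[of "Delta c" "{m..<k}"] by linarith
  also have "\<dots> \<le> c m + M * c m" using gbv_sum_le[OF g m k] by simp
  finally show ?thesis by (simp add: algebra_simps)
qed

lemma weight_upper:
  assumes "n \<in> {(2::nat)^i..<2^(i+1)}"
  shows "real n powr a \<le> 2 powr \<bar>a\<bar> * 2 powr (real i * a)"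
proof -
  define t where "t = real n / 2^i"
  have h: "real (2^i) \<le> real n" "real n \<le> real (2*2^i)" using assms by (simp_all del: of_nat_power of_nat_mult)
  have t: "1 \<le> t" "t \<le> 2" using h by (auto simp: t_def field_simps)
  have n: "real n = 2^i * t" by (simp add: t_def)
  have "real n powr a = 2 powr (real i * a) * t powr a"
    using t by (simp add: n powr_mult powr_realpow[symmetric] powr_powr)
  moreover have "t powr a \<le> 2 powr \<bar>a\<bar>"
  proof (cases "a \<ge> 0")
    case True then show ?thesis using t by (simp add: powr_mono2)
  next
    case False
    then have "t powr a \<le> 1" using t powr_mono2'[of a 1 t] by simp
    also have "1 \<le> 2 powr \<bar>a\<bar>" using powr_mono[of 0 "\<bar>a\<bar>" "2::real"] by simp
    finally show ?thesis .
  qed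
  ultimately show ?thesis by (simp add: mult.commute)
qed

lemma weight_lower:
  assumes "n \<in> {(2::nat)^i..<2^(i+1)}"
  shows "2 powr (-\<bar>a\<bar>) * 2 powr (real i * a) \<le> real n powr a"
proof -
  define t where "t = real n / 2^i"
  have h: "real (2^i) \<le> real n" "real n \<le> real (2*2^i)" using assms by (simp_all del: of_nat_power of_nat_mult)
  have t: "1 \<le> t" "t \<le> 2" using h by (auto simp: t_def field_simps)
  have n: "real n = 2^i * t" by (simp add: t_def)
  have "real n powr a = 2 powr (real i * a) * t powr a"
    using t by (simp add: n powr_mult powr_realpow[symmetric] powr_powr)
  moreover have "2 powr (-\<bar>a\<bar>) \<le> t powr a"
  proof (cases "a \<ge> 0")
    case True
    have "2 powr (-\<bar>a\<bar>) \<le> 1" using powr_mono[of "-\<bar>a\<bar>" 0 "2::real"] by simp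
    also have "1 \<le> t powr a" using t True by (simp add: ge_one_powr_ge_zero)
    finally show ?thesis .
  next
    case False
    then show ?thesis using t by (simp add: powr_mono2')
  qed
  ultimately show ?thesis by (simp add: mult.commute)
qed


lemma gbv_nonneg: "GBV_with M c \<Longrightarrow> 1 \<le> n \<Longrightarrow> 0 \<le> c n"
  unfolding GBV_with_def by blast

lemma c_dyadic:
  assumes g: "GBV_with M c" and p: "0 < p"
  shows "c (2^(t+1)) powr p \<le> (1+M) powr p * 2 powr \<bar>al\<bar> * 2 powr (-(real t) * (al+1))
      * (\<Sum>m\<in>{(2::nat)^t..<2^(t+1)}. real m powr al * c m powr p)"
proof -
  have M: "0 < M" using g unfolding GBV_with_def by simp
  define L where "L = c (2^(t+1)) powr p"
  define K where "K = 2 powr (-\<bar>al\<bar>) * 2 powr (real t * al) * ((1+M) powr (-p) * L)"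
  have each: "K \<le> real m powr al * c m powr p" if m: "m \<in> {(2::nat)^t..<2^(t+1)}" for m
  proof -
    have m1: "1 \<le> m" using m by (metis atLeastLessThan_iff le_trans one_le_power one_le_numeral)
    have "c (2^(t+1)) \<le> (1+M) * c m" using m by (intro gbv_step[OF g m1]) auto
    then have "L \<le> ((1+M) * c m) powr p" unfolding L_def
      using gbv_nonneg[OF g, of "2^(t+1)"] p by (intro powr_mono2) auto
    also have "\<dots> = (1+M) powr p * c m powr p" using M gbv_nonneg[OF g m1] by (simp add: powr_mult)
    finally have "(1+M) powr (-p) * L \<le> c m powr p" using M by (simp add: powr_minus field_simps)
    moreover have "2 powr (-\<bar>al\<bar>) * 2 powr (real t * al) \<le> real m powr al" by (rule weight_lower[OF m])
    ultimately show ?thesis unfolding K_def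
      by (intro mult_mono) (use M in \<open>auto simp: L_def\<close>)
  qed
  have "of_nat (card {(2::nat)^t..<2^(t+1)}) * K \<le> (\<Sum>m\<in>{(2::nat)^t..<2^(t+1)}. real m powr al * c m powr p)"
    by (rule sum_bounded_below) (rule each)
  then have S: "2^t * K \<le> (\<Sum>m\<in>{(2::nat)^t..<2^(t+1)}. real m powr al * c m powr p)" by simp
  have "L = (1+M) powr p * 2 powr \<bar>al\<bar> * 2 powr (-(real t) * (al+1)) * (2^t * K)"
  proof -
    have "(2::real)^t = 2 powr real t" by (simp add: powr_realpow)
    then have "(1+M) powr p * 2 powr \<bar>al\<bar> * 2 powr (-(real t) * (al+1)) * (2^t * K)
        = ((1+M) powr p * (1+M) powr (-p)) * (2 powr \<bar>al\<bar> * 2 powr (-\<bar>al\<bar>))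
          * (2 powr (-(real t) * (al+1)) * 2 powr real t * 2 powr (real t * al)) * L"
      unfolding K_def by (simp add: ac_simps)
    also have "\<dots> = L" using M by (simp add: powr_add[symmetric] algebra_simps)
    finally show ?thesis by simp
  qed
  also have "\<dots> \<le> (1+M) powr p * 2 powr \<bar>al\<bar> * 2 powr (-(real t) * (al+1))
      * (\<Sum>m\<in>{(2::nat)^t..<2^(t+1)}. real m powr al * c m powr p)"
    using S M by (intro mult_left_mono) auto
  finally show ?thesis unfolding L_def .
qed


definition dS :: "real \<Rightarrow> real \<Rightarrow> (nat \<Rightarrow> real) \<Rightarrow> nat \<Rightarrow> real" where
  "dS p al c t = (\<Sum>m\<in>{(2::nat)^t..<2^(t+1)}. real m powr al * c m powr p)"

definition dT :: "real \<Rightarrow> real \<Rightarrow> (nat \<Rightarrow> real) \<Rightarrow> nat \<Rightarrow> real" where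
  "dT p al c j = (if j = 0 then dS p al c 0 else dS p al c (j-1))"

lemma dS_nonneg: "0 \<le> dS p al c t"
  unfolding dS_def by (intro sum_nonneg) auto

lemma dT_nonneg: "0 \<le> dT p al c t"
  unfolding dT_def by (simp add: dS_nonneg)

lemma c_dyadic_T:
  assumes g: "GBV_with M c" and p: "0 < p" and a: "0 < al + 1"
  shows "c (2^j) powr p \<le> ((1+M) powr p * 2 powr \<bar>al\<bar> * 2 powr (al+1)) * 2 powr (-(real j) * (al+1)) * dT p al c j"
proof (cases j)
  case 0
  have M: "0 < M" using g unfolding GBV_with_def by simp
  have "1 \<le> (1+M) powr p" using M p by (simp add: ge_one_powr_ge_zero)
  moreover have "1 \<le> (2::real) powr \<bar>al\<bar>" using powr_mono[of 0 "\<bar>al\<bar>" "2::real"] by simp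
  moreover have "1 \<le> (2::real) powr (al+1)" using a powr_mono[of 0 "al+1" "2::real"] by simp
  ultimately have "1 * 1 * 1 \<le> (1+M) powr p * 2 powr \<bar>al\<bar> * 2 powr (al+1)"
    by (intro mult_mono) auto
  then have K: "1 \<le> (1+M) powr p * 2 powr \<bar>al\<bar> * 2 powr (al+1)" by simp
  have "{Suc 0..<2} = {1::nat}" by auto
  then have e: "dT p al c j = c 1 powr p" using 0 by (simp add: dT_def dS_def)
  show ?thesis using 0 e K mult_right_mono[OF K, of "c 1 powr p"] by simp
next
  case (Suc t)
  have "c (2^j) powr p \<le> (1+M) powr p * 2 powr \<bar>al\<bar> * 2 powr (-(real t) * (al+1)) * dS p al c t"
    using c_dyadic[OF g p, of t al] Suc by (simp add: dS_def)
  also have "2 powr (-(real t) * (al+1)) = 2 powr (al+1) * 2 powr (-(real j) * (al+1))"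
    using Suc by (simp add: powr_add[symmetric] algebra_simps)
  finally show ?thesis using Suc by (simp add: dT_def ac_simps)
qed


lemma pointwise_bound:
  assumes g: "GBV_with M c" and p: "0 < p" and a: "0 < al + 1" and K: "0 \<le> K"
  shows "2 powr \<bar>al\<bar> * 2 powr (real i * (al+1)) * K *
      ((2 powr (-(al+1)/(2*p))) powr (-p * real l) * (M * c (2^(i+l))) powr p)
    \<le> (2 powr \<bar>al\<bar> * K * M powr p * ((1+M) powr p * 2 powr \<bar>al\<bar> * 2 powr (al+1)))
       * (2 powr (-(al+1)/2)) ^ l * dT p al c (i+l)"
proof -
  have M: "0 < M" using g unfolding GBV_with_def by simp
  define K2 where "K2 = (1+M) powr p * 2 powr \<bar>al\<bar> * 2 powr (al+1)"
  define F where "F = 2 powr \<bar>al\<bar> * 2 powr (real i * (al+1)) * K * 2 powr ((al+1) * real l / 2) * M powr p"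
  have c0: "0 \<le> c (2^(i+l))" by (rule gbv_nonneg[OF g]) simp
  have eq1: "(2 powr (-(al+1)/(2*p))) powr (-p * real l) = 2 powr ((al+1) * real l / 2)"
  proof -
    have "(-(al+1)/(2*p)) * (-p * real l) = (al+1) * real l / 2" using p by (simp add: field_simps)
    then show ?thesis unfolding powr_powr by (simp only:)
  qed
  have "2 powr \<bar>al\<bar> * 2 powr (real i * (al+1)) * K *
      ((2 powr (-(al+1)/(2*p))) powr (-p * real l) * (M * c (2^(i+l))) powr p)
      = F * c (2^(i+l)) powr p"
    unfolding eq1 F_def using M c0 by (simp add: powr_mult ac_simps)
  also have "\<dots> \<le> F * (K2 * 2 powr (-(real (i+l)) * (al+1)) * dT p al c (i+l))"
    unfolding K2_def using c_dyadic_T[OF g p a, of "i+l"] K by (intro mult_left_mono) (auto simp: F_def)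
  also have "\<dots> = (2 powr \<bar>al\<bar> * K * M powr p * K2) * (2 powr (real i * (al+1)) * 2 powr ((al+1) * real l / 2) * 2 powr (-(real (i+l)) * (al+1))) * dT p al c (i+l)"
    unfolding F_def by (simp add: ac_simps)
  also have "2 powr (real i * (al+1)) * 2 powr ((al+1) * real l / 2) * 2 powr (-(real (i+l)) * (al+1)) = (2 powr (-(al+1)/2)) ^ l"
    by (simp add: powr_add[symmetric] powr_realpow[symmetric] powr_powr algebra_simps add_divide_distrib) (simp add: field_simps)
  finally show ?thesis unfolding K2_def .
qed


theorem mainTheorem6:
  fixes p \<gamma> M :: real
  assumes "1 < p" and "1/p - 1 < \<gamma>" and "\<gamma> < 1/p" and "M > 0"
  shows "\<exists>C::real. C > 0 \<and> (\<forall>c::nat \<Rightarrow> real. GBV_with M c \<longrightarrow>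
     (\<Sum>\<^sub>\<infinity>n\<in>{1..}. ennreal (real n powr (p + p*\<gamma> - 2)) *
         ennpow (\<Sum>\<^sub>\<infinity>k\<in>{n..}. ennreal \<bar>Delta c k\<bar>) p)
     \<le> ennreal C * (\<Sum>\<^sub>\<infinity>n\<in>{1..}. ennreal (real n powr (p + p*\<gamma> - 2) * c n powr p)))"
proof -
  have p: "0 < p" using assms(1) by simp
  define al where "al = p + p*\<gamma> - 2"
  have "p * (1/p - 1) < p * \<gamma>" using assms(2) p by (intro mult_strict_left_mono) auto
  then have a: "0 < al + 1" using p by (simp add: al_def algebra_simps)
  define q where "q = 2 powr (-(al+1)/(2*p))"
  have "-(al+1)/(2*p) < 0" using a p by (intro divide_neg_pos) auto
  then have q: "0 < q" "q < 1" using powr_less_mono[of "-(al+1)/(2*p)" 0 "2::real"] by (auto simp: q_def)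
  define r where "r = 2 powr (-(al+1)/2)"
  have "-(al+1)/2 < 0" using a by simp
  then have r: "0 < r" "r < 1" using powr_less_mono[of "-(al+1)/2" 0 "2::real"] by (auto simp: r_def)
  define K where "K = (1-q) powr (-p)"
  have K: "0 < K" using q by (simp add: K_def)
  define K2 where "K2 = (1+M) powr p * 2 powr \<bar>al\<bar> * 2 powr (al+1)"
  have K2: "0 < K2" using assms(4) by (simp add: K2_def)
  define K3 where "K3 = 2 powr \<bar>al\<bar> * K * M powr p * K2"
  have K3: "0 < K3" using K K2 assms(4) by (simp add: K3_def)
  define C where "C = 2 * K3 / (1 - r)"
  have C: "0 < C" using K3 r by (simp add: C_def)
  show ?thesis unfolding al_def[symmetric]
  proof (intro exI conjI allI impI)
    show "0 < C" by (rule C)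
    fix c :: "nat \<Rightarrow> real" assume g: "GBV_with M c"
    define B where "B n = (\<Sum>\<^sub>\<infinity>k\<in>{n..}. ennreal \<bar>Delta c k\<bar>)" for n
    define R where "R = (\<Sum>\<^sub>\<infinity>n\<in>{1..}. ennreal (real n powr al * c n powr p))"
    have R_eq: "R = (\<Sum>i. ennreal (dS p al c i))"
      using dyadic_infsum[of "\<lambda>n. ennreal (real n powr al * c n powr p)" 0]
      by (simp add: R_def dS_def)
    have LHS_eq: "(\<Sum>\<^sub>\<infinity>n\<in>{1..}. ennreal (real n powr al) * ennpow (B n) p)
       = (\<Sum>i. \<Sum>n\<in>{(2::nat)^i..<2^(i+1)}. ennreal (real n powr al) * ennpow (B n) p)"
      using dyadic_infsum[of "\<lambda>n. ennreal (real n powr al) * ennpow (B n) p" 0] by simp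
    have blk: "(\<Sum>n\<in>{(2::nat)^i..<2^(i+1)}. ennreal (real n powr al) * ennpow (B n) p)
        \<le> (\<Sum>l. ennreal (K3 * r^l * dT p al c (i+l)))" for i
    proof -
      define W where "W = 2 powr \<bar>al\<bar> * 2 powr (real i * (al+1))"
      have W: "0 \<le> W" by (simp add: W_def)
      have "(\<Sum>n\<in>{(2::nat)^i..<2^(i+1)}. ennreal (real n powr al) * ennpow (B n) p)
          \<le> (\<Sum>n\<in>{(2::nat)^i..<2^(i+1)}. ennreal (2 powr \<bar>al\<bar> * 2 powr (real i * al)) * ennpow (B (2^i)) p)"
        unfolding B_def using p
        by (intro sum_mono mult_mono ennreal_leI weight_upper ennpow_mono infsum_mono_set_ennreal) auto
      also have "\<dots> = ennreal W * ennpow (B (2^i)) p"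
      proof -
        have e: "(2::real)^i * 2 powr (real i * al) = 2 powr (real i * (al+1))"
          by (simp add: powr_realpow[symmetric] powr_add[symmetric] algebra_simps)
        have "(\<Sum>n\<in>{(2::nat)^i..<2^(i+1)}. ennreal (2 powr \<bar>al\<bar> * 2 powr (real i * al)) * ennpow (B (2^i)) p)
            = ennreal (2^i) * (ennreal (2 powr \<bar>al\<bar> * 2 powr (real i * al)) * ennpow (B (2^i)) p)"
        proof -
          have cd: "card {(2::nat)^i..<2^(i+1)} = 2^i" by simp
          have o: "(of_nat (2^i) :: ennreal) = ennreal (2^i)"
            by (simp only: ennreal_of_nat_eq_real_of_nat of_nat_power of_nat_numeral)
          show ?thesis by (simp only: sum_constant cd o)
        qed
        also have "\<dots> = ennreal W * ennpow (B (2^i)) p"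
        proof -
          have w: "(2::real)^i * (2 powr \<bar>al\<bar> * 2 powr (real i * al)) = W"
            unfolding W_def e[symmetric] by (simp only: ac_simps)
          have "ennreal (2^i) * (ennreal (2 powr \<bar>al\<bar> * 2 powr (real i * al)) * ennpow (B (2^i)) p)
             = ennreal ((2::real)^i * (2 powr \<bar>al\<bar> * 2 powr (real i * al))) * ennpow (B (2^i)) p"
            by (subst ennreal_mult) (auto simp: mult.assoc)
          then show ?thesis by (simp only: w)
        qed
        finally show ?thesis .
      qed
      also have "\<dots> \<le> ennreal W * (ennreal K * (\<Sum>l. ennreal (q powr (-p * real l) * (M * c (2^(i+l))) powr p)))"
      proof (intro mult_left_mono order.refl zero_le)
        have "B (2^i) \<le> (\<Sum>l. ennreal (M * c (2^(i+l))))"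
          unfolding B_def dyadic_infsum
        proof (intro suminf_le summableI)
          fix l
          have "(\<Sum>k\<in>{(2::nat)^(i+l)..<2^(i+l+1)}. \<bar>Delta c k\<bar>) \<le> M * c (2^(i+l))"
            by (rule gbv_sum_le[OF g]) auto
          then show "(\<Sum>k\<in>{(2::nat)^(i+l)..<2^(i+l+1)}. ennreal \<bar>Delta c k\<bar>) \<le> ennreal (M * c (2^(i+l)))"
            by (simp add: ennreal_leI)
        qed
        then have "ennpow (B (2^i)) p \<le> ennpow (\<Sum>l. ennreal (M * c (2^(i+l)))) p"
          using p by (intro ennpow_mono) auto
        also have "\<dots> \<le> ennreal K * (\<Sum>l. ennreal (q powr (-p * real l) * (M * c (2^(i+l))) powr p))"
          unfolding K_def using assms(4) gbv_nonneg[OF g] p q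
          by (intro pow_sum_bound) auto
        finally show "ennpow (B (2^i)) p \<le> ennreal K * (\<Sum>l. ennreal (q powr (-p * real l) * (M * c (2^(i+l))) powr p))" .
      qed
      also have "\<dots> = (\<Sum>l. ennreal (W * K * (q powr (-p * real l) * (M * c (2^(i+l))) powr p)))"
        using W K by (simp add: ennreal_mult mult.assoc)
      also have "\<dots> \<le> (\<Sum>l. ennreal (K3 * r^l * dT p al c (i+l)))"
      proof (intro suminf_le summableI ennreal_leI)
        fix l
        show "W * K * (q powr (-p * real l) * (M * c (2^(i+l))) powr p) \<le> K3 * r^l * dT p al c (i+l)"
          using pointwise_bound[OF g p a, of K i l] K
          unfolding W_def q_def K3_def K2_def r_def by simp
      qed
      finally show ?thesis .
    qed
    have Tsum: "(\<Sum>i. ennreal (dT p al c i)) \<le> 2 * R"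
    proof -
      have "(\<Sum>i. ennreal (dT p al c i)) = (\<Sum>j. ennreal (dT p al c (j+1))) + ennreal (dT p al c 0)"
        using suminf_offset[OF summableI, of "\<lambda>i. ennreal (dT p al c i)" 1] by simp
      also have "\<dots> = R + ennreal (dS p al c 0)" by (simp add: dT_def R_eq)
      also have "\<dots> \<le> R + R" unfolding R_eq by (intro add_left_mono ennsum_term_le)
      finally show ?thesis by (simp add: mult_2)
    qed
    have "(\<Sum>\<^sub>\<infinity>n\<in>{1..}. ennreal (real n powr al) * ennpow (B n) p)
        \<le> (\<Sum>i. \<Sum>l. ennreal (K3 * r^l * dT p al c (i+l)))"
      unfolding LHS_eq by (intro suminf_le summableI blk)
    also have "\<dots> = (\<Sum>l. \<Sum>i. ennreal (K3 * r^l * dT p al c (i+l)))" by (rule ennsum_swap)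
    also have "\<dots> = (\<Sum>l. ennreal (K3 * r^l) * (\<Sum>i. ennreal (dT p al c (i+l))))"
      using K3 r by (simp add: ennreal_mult dT_nonneg)
    also have "\<dots> \<le> (\<Sum>l. ennreal (K3 * r^l) * (2 * R))"
      by (intro suminf_le summableI mult_left_mono order.trans[OF ennsum_offset_le Tsum]) auto
    also have "\<dots> = ennreal (K3 / (1 - r)) * (2 * R)"
    proof -
      have "summable (\<lambda>l. K3 * r^l)" using r by (intro summable_mult summable_geometric) auto
      then have "(\<Sum>l. ennreal (K3 * r^l)) = ennreal (K3 / (1 - r))"
        using K3 r by (simp add: suminf_ennreal2 suminf_mult suminf_geometric)
      then show ?thesis by (simp add: ennreal_suminf_multc)
    qed
    also have "\<dots> = ennreal C * R"
    proof -
      have "ennreal C = ennreal 2 * ennreal (K3 / (1 - r))"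
        unfolding C_def using K3 r by (subst ennreal_mult[symmetric]) auto
      then show ?thesis by (simp add: ac_simps)
    qed
    finally show "(\<Sum>\<^sub>\<infinity>n\<in>{1..}. ennreal (real n powr al) * ennpow (\<Sum>\<^sub>\<infinity>k\<in>{n..}. ennreal \<bar>Delta c k\<bar>) p)
        \<le> ennreal C * (\<Sum>\<^sub>\<infinity>n\<in>{1..}. ennreal (real n powr al * c n powr p))"
      unfolding B_def R_def .
  qed
qed

end
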